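(* Let $L\ge2$, let $\ell$ be continuously differentiable, and let $W(t)$, $t\ge0$, be a gradient flow trajectory. Then for all $t\ge0$: (i) for every $1\le k\le L$, $\|W_k(t)\|_F^2-\|W_k(t)\|_2^2\le D$; (ii) for every $1\le k<L$ with $W_{k+1}(t)\ne0$, $$\langle v_{k+1}(t),u_k(t)\rangle^2\ \ge\ 1-\frac{D+\|W_{k+1}(0)\|_2^2+\|W_k(0)\|_2^2}{\|W_{k+1}(t)\|_2^2};$$ (iii) if $\max_{1\le k\le L}\|W_k(t)\|_F\to\infty$ as $t\to\infty$, then $\left|\left\langle \frac{w_{\mathrm{prod}}(t)}{\prod_{k=1}^L\|W_k(t)\|_F},v_1(t)\right\rangle\right|\to1$.
   Context: A depth-$L$ linear network is $W=(W_L,\dots,W_1)$ with $W_k\in\mathbb{R}^{d_k\times d_{k-1}}$, $d_0=d$, $d_L=1$, and $w_{\mathrm{prod}}:=(W_L\cdots W_1)^\top\in\mathbb{R}^d$. Given vectors $z_1,\dots,z_n\in\mathbb{R}^d$ (with $z_i=y_ix_i$, $\|x_i\|\le1$, $y_i\in\{\pm1\}$), the risk is $\mathcal{R}(W)=\frac1n\sum_{i=1}^n\ell(\langle w_{\mathrm{prod}},z_i\rangle)$. Gradient flow: a $C^1$ curve $W(t)$, $t\in[0,\infty)$, with $\frac{d}{dt}W(t)=-\nabla\mathcal{R}(W(t))$. $\|\cdot\|_F$ is the Frobenius norm and $\|\cdot\|_2$ the spectral norm. The constant $D$ depends only on the initialization: $$D:=\Big(\max_{1\le k\le L}\|W_k(0)\|_F^2\Big)-\|W_L(0)\|_F^2+\sum_{k=1}^{L-1}\big\|W_k(0)W_k(0)^\top-W_{k+1}(0)^\top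 W_{k+1}(0)\big\|_2.$$ For each $k$ and time $t$, $u_k(t),v_k(t)$ are a pair of first (top) left and right unit singular vectors of $W_k(t)$. *)

theory Defs
  imports "HOL-Analysis.Analysis"
begin

text \<open>Vectors in R^p are represented as functions nat => real (only indices < p matter);
  an m x p matrix is a function nat => nat => real (only entries i < m, j < p matter).
  A depth-L network is W :: nat => nat => nat => real, W k being the d k x d (k-1) matrix W_k,
  for 1 <= k <= L.\<close>

type_synonym vec = "nat \<Rightarrow> real"
type_synonym mat = "nat \<Rightarrow> nat \<Rightarrow> real"
type_synonym net = "nat \<Rightarrow> mat"

definition vinner :: "nat \<Rightarrow> vec \<Rightarrow> vec \<Rightarrow> real" where
  "vinner p u v = (\<Sum>j<p. u j * v j)"

definition vnorm :: "nat \<Rightarrow> vec \<Rightarrow> real" where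
  "vnorm p v = sqrt (\<Sum>j<p. (v j)\<^sup>2)"

definition mat_vec :: "nat \<Rightarrow> mat \<Rightarrow> vec \<Rightarrow> vec" where
  "mat_vec p A v = (\<lambda>i. \<Sum>j<p. A i j * v j)"

definition fro_norm :: "nat \<Rightarrow> nat \<Rightarrow> mat \<Rightarrow> real" where
  "fro_norm m p A = sqrt (\<Sum>i<m. \<Sum>j<p. (A i j)\<^sup>2)"

definition spec_norm :: "nat \<Rightarrow> nat \<Rightarrow> mat \<Rightarrow> real" where
  "spec_norm m p A = Sup {vnorm m (mat_vec p A v) | v. vnorm p v \<le> 1}"

definition top_sv_pair :: "nat \<Rightarrow> nat \<Rightarrow> mat \<Rightarrow> vec \<Rightarrow> vec \<Rightarrow> bool" where
  "top_sv_pair m p A u v \<longleftrightarrow>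
     vnorm m u = 1 \<and> vnorm p v = 1 \<and>
     (\<forall>i<m. (\<Sum>j<p. A i j * v j) = spec_norm m p A * u i) \<and>
     (\<forall>j<p. (\<Sum>i<m. A i j * u i) = spec_norm m p A * v j)"

definition mat_nonzero :: "nat \<Rightarrow> nat \<Rightarrow> mat \<Rightarrow> bool" where
  "mat_nonzero m p A \<longleftrightarrow> (\<exists>i<m. \<exists>j<p. A i j \<noteq> 0)"

text \<open>prodW d W k = W_k ... W_1, a d k x d 0 matrix (prodW d W 0 = identity).\<close>
fun prodW :: "(nat \<Rightarrow> nat) \<Rightarrow> net \<Rightarrow> nat \<Rightarrow> mat" where
  "prodW d W 0 = (\<lambda>i j. if i = j then 1 else 0)"
| "prodW d W (Suc k) = (\<lambda>i j. \<Sum>l<d k. W (Suc k) i l * prodW d W k l j)"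

text \<open>w_prod = (W_L ... W_1)^T in R^{d 0} (d L = 1).\<close>
definition wprod :: "(nat \<Rightarrow> nat) \<Rightarrow> nat \<Rightarrow> net \<Rightarrow> vec" where
  "wprod d L W = (\<lambda>j. prodW d W L 0 j)"

definition risk :: "(real \<Rightarrow> real) \<Rightarrow> nat \<Rightarrow> (nat \<Rightarrow> vec) \<Rightarrow> (nat \<Rightarrow> nat) \<Rightarrow> nat \<Rightarrow> net \<Rightarrow> real" where
  "risk loss n z d L W = (1 / real n) * (\<Sum>i<n. loss (vinner (d 0) (wprod d L W) (z i)))"

definition upd_entry :: "net \<Rightarrow> nat \<Rightarrow> nat \<Rightarrow> nat \<Rightarrow> real \<Rightarrow> net" where
  "upd_entry W k i j s = W(k := (W k)(i := (W k i)(j := s)))"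

text \<open>Gradient flow on [0,\<infinity>): a C^1 curve whose (one-sided at 0) derivative equals minus
  the gradient of the risk; the gradient is given by its components, the partial derivatives
  of the risk w.r.t. each parameter entry.\<close>
definition gradient_flow ::
  "(real \<Rightarrow> real) \<Rightarrow> nat \<Rightarrow> (nat \<Rightarrow> vec) \<Rightarrow> (nat \<Rightarrow> nat) \<Rightarrow> nat \<Rightarrow> (real \<Rightarrow> net) \<Rightarrow> bool" where
  "gradient_flow loss n z d L W \<longleftrightarrow>
    (\<exists>W' :: real \<Rightarrow> net.
      \<forall>k\<in>{1..L}. \<forall>i<d k. \<forall>j<d (k - 1).
        continuous_on {0..} (\<lambda>s. W' s k i j) \<and>
        (\<forall>t\<ge>0. ((\<lambda>s. W s k i j) has_real_derivative W' t k i j) (at t within {0..}) \<and>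
                ((\<lambda>s. risk loss n z d L (upd_entry (W t) k i j s))
                    has_real_derivative (- W' t k i j)) (at (W t k i j))))"

definition gram_diff :: "(nat \<Rightarrow> nat) \<Rightarrow> net \<Rightarrow> nat \<Rightarrow> mat" where
  "gram_diff d W k = (\<lambda>i i'. (\<Sum>j<d (k - 1). W k i j * W k i' j)
                           - (\<Sum>r<d (Suc k). W (Suc k) r i * W (Suc k) r i'))"

definition Dconst :: "(nat \<Rightarrow> nat) \<Rightarrow> nat \<Rightarrow> net \<Rightarrow> real" where
  "Dconst d L W0 =
     Max ((\<lambda>k. (fro_norm (d k) (d (k - 1)) (W0 k))\<^sup>2) ` {1..L})
     - (fro_norm (d L) (d (L - 1)) (W0 L))\<^sup>2
     + (\<Sum>k\<in>{1..L - 1}. spec_norm (d k) (d k) (gram_diff d W0 k))"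

end

theory Submission
  imports Defs "HOL-Real_Asymp.Real_Asymp"
begin


definition nsq :: "nat \<Rightarrow> vec \<Rightarrow> real" where "nsq p v = (\<Sum>j<p. (v j)\<^sup>2)"
definition mtv :: "nat \<Rightarrow> mat \<Rightarrow> vec \<Rightarrow> vec" where "mtv m A y = (\<lambda>j. \<Sum>i<m. A i j * y i)"
definition fsq :: "nat \<Rightarrow> nat \<Rightarrow> mat \<Rightarrow> real" where "fsq m p A = (\<Sum>i<m. \<Sum>j<p. (A i j)\<^sup>2)"
definition qf :: "nat \<Rightarrow> mat \<Rightarrow> vec \<Rightarrow> real" where "qf m C x = (\<Sum>i<m. \<Sum>i'<m. x i * C i i' * x i')"

lemma nsq_nonneg: "0 \<le> nsq p v" unfolding nsq_def by (simp add: sum_nonneg)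
lemma fsq_nonneg: "0 \<le> fsq m p A" unfolding fsq_def by (simp add: sum_nonneg)
lemma vnorm_nsq: "vnorm p v = sqrt (nsq p v)" unfolding vnorm_def nsq_def ..
lemma vnorm_sq: "(vnorm p v)\<^sup>2 = nsq p v" unfolding vnorm_nsq using nsq_nonneg[of p v] by simp
lemma vnorm_nonneg: "0 \<le> vnorm p v" unfolding vnorm_nsq using nsq_nonneg[of p v] by simp
lemma fro_sq: "(fro_norm m p A)\<^sup>2 = fsq m p A"
  unfolding fro_norm_def fsq_def[symmetric] using fsq_nonneg by simp
lemma fro_nonneg: "0 \<le> fro_norm m p A" unfolding fro_norm_def by (simp add: sum_nonneg)
lemma nsq_vinner: "nsq p v = vinner p v v" unfolding nsq_def vinner_def by (simp add: power2_eq_square)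

lemma cs: "(vinner p u v)\<^sup>2 \<le> nsq p u * nsq p v"
  unfolding vinner_def nsq_def by (rule Cauchy_Schwarz_ineq_sum)

lemma cs_abs: "\<bar>vinner p u v\<bar> \<le> vnorm p u * vnorm p v"
proof -
  have "\<bar>vinner p u v\<bar> = sqrt ((vinner p u v)\<^sup>2)" by simp
  also have "\<dots> \<le> sqrt (nsq p u * nsq p v)" using cs real_sqrt_le_mono by blast
  finally show ?thesis by (simp add: vnorm_nsq real_sqrt_mult)
qed

lemma mv_bound: "nsq m (mat_vec p A v) \<le> fsq m p A * nsq p v"
proof -
  have "nsq m (mat_vec p A v) = (\<Sum>i<m. (\<Sum>j<p. A i j * v j)\<^sup>2)" unfolding nsq_def mat_vec_def ..
  also have "\<dots> \<le> (\<Sum>i<m. (\<Sum>j<p. (A i j)\<^sup>2) * nsq p v)"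
    unfolding nsq_def by (rule sum_mono) (rule Cauchy_Schwarz_ineq_sum)
  also have "\<dots> = fsq m p A * nsq p v" unfolding fsq_def by (simp add: sum_distrib_right)
  finally show ?thesis .
qed

lemma mtv_bound: "nsq p (mtv m A y) \<le> fsq m p A * nsq m y"
proof -
  have "nsq p (mtv m A y) = (\<Sum>j<p. (\<Sum>i<m. A i j * y i)\<^sup>2)" unfolding nsq_def mtv_def ..
  also have "\<dots> \<le> (\<Sum>j<p. (\<Sum>i<m. (A i j)\<^sup>2) * nsq m y)"
    unfolding nsq_def by (rule sum_mono) (rule Cauchy_Schwarz_ineq_sum)
  also have "\<dots> = fsq m p A * nsq m y" unfolding fsq_def
    by (simp add: sum_distrib_right sum.swap[of _ "{..<p}"])
  finally show ?thesis .
qed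

lemma duality: "vinner p (mtv m A y) w = vinner m y (mat_vec p A w)"
  unfolding vinner_def mtv_def mat_vec_def
  by (simp add: sum_distrib_left sum_distrib_right sum.swap[of _ "{..<p}"] mult_ac)

lemma nsq_zero: "nsq p v = 0 \<Longrightarrow> j < p \<Longrightarrow> v j = 0"
  unfolding nsq_def by (subst (asm) sum_nonneg_eq_0_iff) auto

lemma nsq_scale: "nsq p (\<lambda>j. c * v j) = c\<^sup>2 * nsq p v"
  unfolding nsq_def by (simp add: power_mult_distrib sum_distrib_left)

lemma mat_vec_scale: "mat_vec p A (\<lambda>j. c * v j) = (\<lambda>i. c * mat_vec p A v i)"
  unfolding mat_vec_def by (simp add: sum_distrib_left mult_ac)

lemma spec_bdd: "bdd_above {vnorm m (mat_vec p A v) | v. vnorm p v \<le> 1}"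
proof (rule bdd_aboveI)
  fix x assume "x \<in> {vnorm m (mat_vec p A v) | v. vnorm p v \<le> 1}"
  then obtain v where x: "x = vnorm m (mat_vec p A v)" and v: "vnorm p v \<le> 1" by auto
  have "nsq p v \<le> 1" using v vnorm_sq[of p v] vnorm_nonneg[of p v]
    by (metis abs_of_nonneg abs_square_le_1)
  then have "fsq m p A * nsq p v \<le> fsq m p A" using fsq_nonneg nsq_nonneg
    by (simp add: mult_left_le)
  then have "nsq m (mat_vec p A v) \<le> fsq m p A" using mv_bound[of m p A v] by linarith
  then show "x \<le> sqrt (fsq m p A)" unfolding x vnorm_nsq by simp
qed

lemma spec_upper: "vnorm p v \<le> 1 \<Longrightarrow> vnorm m (mat_vec p A v) \<le> spec_norm m p A"
  unfolding spec_norm_def by (rule cSup_upper[OF _ spec_bdd]) auto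

lemma spec_nonneg: "0 \<le> spec_norm m p A"
proof -
  have "vnorm m (mat_vec p A (\<lambda>_. 0)) \<le> spec_norm m p A"
    by (rule spec_upper) (simp add: vnorm_def)
  moreover have "vnorm m (mat_vec p A (\<lambda>_. 0)) = 0" by (simp add: vnorm_def mat_vec_def)
  ultimately show ?thesis by simp
qed

lemma spec_le_fro: "spec_norm m p A \<le> fro_norm m p A"
  unfolding spec_norm_def
proof (rule cSup_least)
  show "{vnorm m (mat_vec p A v) |v. vnorm p v \<le> 1} \<noteq> {}" by (auto intro!: exI[of _ "\<lambda>_. 0"] simp: vnorm_def)
next
  fix x assume "x \<in> {vnorm m (mat_vec p A v) | v. vnorm p v \<le> 1}"
  then obtain v where x: "x = vnorm m (mat_vec p A v)" and v: "vnorm p v \<le> 1" by auto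
  have "nsq p v \<le> 1" using v vnorm_sq[of p v] vnorm_nonneg[of p v]
    by (metis abs_of_nonneg abs_square_le_1)
  then have "fsq m p A * nsq p v \<le> fsq m p A" using fsq_nonneg nsq_nonneg
    by (simp add: mult_left_le)
  then have "nsq m (mat_vec p A v) \<le> fsq m p A" using mv_bound[of m p A v] by linarith
  then show "x \<le> fro_norm m p A" unfolding x vnorm_nsq fro_norm_def fsq_def[symmetric] by simp
qed

lemma spec_sq: "nsq m (mat_vec p A v) \<le> (spec_norm m p A)\<^sup>2 * nsq p v"
proof (cases "nsq p v = 0")
  case True
  then show ?thesis using mv_bound[of m p A v] nsq_nonneg[of m] by simp
next
  case False
  then have pos: "nsq p v > 0" using nsq_nonneg[of p v] by simp
  define c where "c = 1 / sqrt (nsq p v)"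
  have c2: "c\<^sup>2 * nsq p v = 1" using pos unfolding c_def by (simp add: power_divide)
  have "vnorm p (\<lambda>j. c * v j) \<le> 1" unfolding vnorm_nsq nsq_scale c2 by simp
  then have "vnorm m (mat_vec p A (\<lambda>j. c * v j)) \<le> spec_norm m p A" by (rule spec_upper)
  then have "nsq m (mat_vec p A (\<lambda>j. c * v j)) \<le> (spec_norm m p A)\<^sup>2"
    by (metis vnorm_nonneg power_mono vnorm_sq)
  then have "c\<^sup>2 * nsq m (mat_vec p A v) \<le> (spec_norm m p A)\<^sup>2"
    by (simp add: mat_vec_scale nsq_scale)
  then have "c\<^sup>2 * nsq m (mat_vec p A v) * nsq p v \<le> (spec_norm m p A)\<^sup>2 * nsq p v"
    using pos by (simp add: mult_right_mono)
  then show ?thesis using c2 by (metis mult.assoc mult.commute mult_1)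
qed

lemma mtv_sq_le: "(nsq p (mtv m A y))\<^sup>2 \<le> nsq m y * nsq m (mat_vec p A (mtv m A y))"
proof -
  have "nsq p (mtv m A y) = vinner m y (mat_vec p A (mtv m A y))"
    unfolding nsq_vinner duality ..
  then show ?thesis using cs by metis
qed

lemma mtv_spec: "nsq p (mtv m A y) \<le> (spec_norm m p A)\<^sup>2 * nsq m y"
proof (cases "nsq p (mtv m A y) = 0")
  case True then show ?thesis using nsq_nonneg by simp
next
  case False
  then have pos: "nsq p (mtv m A y) > 0" using nsq_nonneg[of p] by (simp add: less_le)
  have "(nsq p (mtv m A y))\<^sup>2 \<le> nsq m y * ((spec_norm m p A)\<^sup>2 * nsq p (mtv m A y))"
    using mtv_sq_le[of p m A y] spec_sq[of m p A "mtv m A y"] nsq_nonneg[of m y]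
    by (meson mult_left_mono order_trans)
  then have "nsq p (mtv m A y) * nsq p (mtv m A y) \<le> (nsq m y * (spec_norm m p A)\<^sup>2) * nsq p (mtv m A y)"
    by (simp add: power2_eq_square mult_ac)
  then show ?thesis using pos by (simp add: mult_ac)
qed

lemma qf_vinner: "qf m C x = vinner m x (mat_vec m C x)"
  unfolding qf_def vinner_def mat_vec_def by (simp add: sum_distrib_left mult_ac)

lemma qf_bound: "\<bar>qf m C x\<bar> \<le> spec_norm m m C * nsq m x"
proof -
  have "\<bar>qf m C x\<bar> \<le> vnorm m x * vnorm m (mat_vec m C x)" unfolding qf_vinner by (rule cs_abs)
  also have "vnorm m (mat_vec m C x) \<le> spec_norm m m C * vnorm m x"
  proof -
    have "nsq m (mat_vec m C x) \<le> (spec_norm m m C * vnorm m x)\<^sup>2"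
      using spec_sq[of m m C x] by (simp add: power_mult_distrib vnorm_sq)
    then show ?thesis unfolding vnorm_nsq
      by (metis real_sqrt_le_mono real_sqrt_abs abs_of_nonneg spec_nonneg vnorm_nonneg vnorm_nsq mult_nonneg_nonneg)
  qed
  then have "vnorm m x * vnorm m (mat_vec m C x) \<le> vnorm m x * (spec_norm m m C * vnorm m x)"
    using vnorm_nonneg by (simp add: mult_left_mono)
  also have "\<dots> = spec_norm m m C * (vnorm m x)\<^sup>2" by (simp add: power2_eq_square mult_ac)
  finally show ?thesis by (simp add: vnorm_sq)
qed

lemma qf_cong: "(\<And>i i'. i < m \<Longrightarrow> i' < m \<Longrightarrow> C i i' = C' i i') \<Longrightarrow> qf m C x = qf m C' x"
  unfolding qf_def by simp

lemma nsq_mtv_qf: "nsq p (mtv m A x) = qf m (\<lambda>i i'. \<Sum>j<p. A i j * A i' j) x"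
  unfolding nsq_def mtv_def qf_def power2_eq_square
  by (simp add: sum_distrib_left sum_distrib_right sum.swap[of _ "{..<p}"] mult_ac)

lemma nsq_mv_qf: "nsq q (mat_vec m B x) = qf m (\<lambda>i i'. \<Sum>r<q. B r i * B r i') x"
  unfolding nsq_def mat_vec_def qf_def power2_eq_square
  by (simp add: sum_distrib_left sum_distrib_right sum.swap[of _ "{..<q}"] mult_ac)

lemma qf_diff: "qf m (\<lambda>i i'. C i i' - C' i i') x = qf m C x - qf m C' x"
  unfolding qf_def by (simp add: algebra_simps sum_subtractf)

lemma gram_identity:
  "nsq p (mtv m A x) = nsq q (mat_vec m B x)
     + qf m (\<lambda>i i'. (\<Sum>j<p. A i j * A i' j) - (\<Sum>r<q. B r i * B r i')) x"
  unfolding qf_diff nsq_mtv_qf nsq_mv_qf by simp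



lemma vn_spec: "vnorm m (mat_vec p A v) \<le> spec_norm m p A * vnorm p v"
proof -
  have "vnorm m (mat_vec p A v) \<le> sqrt ((spec_norm m p A)\<^sup>2 * nsq p v)"
    unfolding vnorm_nsq using spec_sq real_sqrt_le_mono by blast
  also have "\<dots> = spec_norm m p A * vnorm p v"
    by (simp add: real_sqrt_mult vnorm_nsq spec_nonneg)
  finally show ?thesis .
qed

lemma vn_mtv: "vnorm p (mtv m A y) \<le> spec_norm m p A * vnorm m y"
proof -
  have "vnorm p (mtv m A y) \<le> sqrt ((spec_norm m p A)\<^sup>2 * nsq m y)"
    unfolding vnorm_nsq using mtv_spec real_sqrt_le_mono by blast
  also have "\<dots> = spec_norm m p A * vnorm m y"
    by (simp add: real_sqrt_mult vnorm_nsq spec_nonneg)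
  finally show ?thesis .
qed

lemma vnorm_diff: "vnorm m (\<lambda>i. f i - g i) \<le> vnorm m f + vnorm m g"
proof -
  have "vnorm m (\<lambda>i. f i - g i) = L2_set (\<lambda>i. f i + (- g i)) {..<m}"
    unfolding vnorm_def L2_set_def by simp
  also have "\<dots> \<le> L2_set f {..<m} + L2_set (\<lambda>i. - g i) {..<m}" by (rule L2_set_triangle_ineq)
  also have "\<dots> = vnorm m f + vnorm m g" unfolding vnorm_def L2_set_def by simp
  finally show ?thesis .
qed

lemma vnorm_cong: "(\<And>i. i < m \<Longrightarrow> f i = g i) \<Longrightarrow> vnorm m f = vnorm m g"
  unfolding vnorm_def by simp

lemma nsq_cong: "(\<And>i. i < m \<Longrightarrow> f i = g i) \<Longrightarrow> nsq m f = nsq m g"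
  unfolding nsq_def by simp

lemma spec_gram_le:
  "spec_norm m m (\<lambda>i i'. (\<Sum>j<p. A i j * A i' j) - (\<Sum>r<q. B r i * B r i'))
     \<le> (spec_norm m p A)\<^sup>2 + (spec_norm q m B)\<^sup>2"
  unfolding spec_norm_def[of m m]
proof (rule cSup_least)
  show "{vnorm m (mat_vec m (\<lambda>i i'. (\<Sum>j<p. A i j * A i' j) - (\<Sum>r<q. B r i * B r i')) v) |v. vnorm m v \<le> 1} \<noteq> {}"
    by (auto intro!: exI[of _ "\<lambda>_. 0"] simp: vnorm_def)
next
  let ?C = "\<lambda>i i'. (\<Sum>j<p. A i j * A i' j) - (\<Sum>r<q. B r i * B r i')"
  fix z assume "z \<in> {vnorm m (mat_vec m ?C v) |v. vnorm m v \<le> 1}"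
  then obtain x where z: "z = vnorm m (mat_vec m ?C x)" and x: "vnorm m x \<le> 1" by auto
  have eq: "mat_vec m ?C x = (\<lambda>i. mat_vec p A (mtv m A x) i - mtv q B (mat_vec m B x) i)"
    unfolding mat_vec_def mtv_def
    by (simp add: right_diff_distrib sum_subtractf left_diff_distrib sum_distrib_left sum_distrib_right
        sum.swap[of _ "{..<m}"] mult_ac)
  have "z \<le> vnorm m (mat_vec p A (mtv m A x)) + vnorm m (mtv q B (mat_vec m B x))"
    unfolding z eq by (rule vnorm_diff)
  also have "\<dots> \<le> spec_norm m p A * (spec_norm m p A * vnorm m x) + spec_norm q m B * (spec_norm q m B * vnorm m x)"
  proof (rule add_mono)
    show "vnorm m (mat_vec p A (mtv m A x)) \<le> spec_norm m p A * (spec_norm m p A * vnorm m x)"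
      using vn_spec[of m p A "mtv m A x"] vn_mtv[of p m A x] spec_nonneg[of m p A]
      by (meson mult_left_mono order_trans)
    show "vnorm m (mtv q B (mat_vec m B x)) \<le> spec_norm q m B * (spec_norm q m B * vnorm m x)"
      using vn_mtv[of m q B "mat_vec m B x"] vn_spec[of q m B x] spec_nonneg[of q m B]
      by (meson mult_left_mono order_trans)
  qed
  also have "\<dots> = ((spec_norm m p A)\<^sup>2 + (spec_norm q m B)\<^sup>2) * vnorm m x"
    by (simp add: power2_eq_square algebra_simps)
  also have "\<dots> \<le> (spec_norm m p A)\<^sup>2 + (spec_norm q m B)\<^sup>2"
    using x vnorm_nonneg[of m x] by (simp add: mult_left_le)
  finally show "z \<le> (spec_norm m p A)\<^sup>2 + (spec_norm q m B)\<^sup>2" .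
qed

lemma unit_nsq: "vnorm m u = 1 \<Longrightarrow> nsq m u = 1"
  using vnorm_sq[of m u] by simp

lemma sv_decomp:
  assumes sv: "top_sv_pair m p A u v"
  shows "nsq p (mtv m A y) \<le> (spec_norm m p A)\<^sup>2 * (vinner m y u)\<^sup>2
            + (fsq m p A - (spec_norm m p A)\<^sup>2) * (nsq m y - (vinner m y u)\<^sup>2)"
proof -
  define \<sigma> where "\<sigma> = spec_norm m p A"
  define \<beta> where "\<beta> = vinner m y u"
  have nu: "nsq m u = 1" and nv: "nsq p v = 1" using sv unfolding top_sv_pair_def by (auto intro: unit_nsq)
  have Av: "\<And>i. i < m \<Longrightarrow> (\<Sum>j<p. A i j * v j) = \<sigma> * u i"
    and Atu: "\<And>j. j < p \<Longrightarrow> (\<Sum>i<m. A i j * u i) = \<sigma> * v j"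
    using sv unfolding top_sv_pair_def \<sigma>_def by auto
  define y' where "y' = (\<lambda>i. y i - \<beta> * u i)"
  define A' where "A' = (\<lambda>i j. A i j - \<sigma> * u i * v j)"
  define w where "w = mtv m A' y'"
  have yu: "(\<Sum>i<m. y i * u i) = \<beta>" unfolding \<beta>_def vinner_def ..
  have uu: "(\<Sum>i<m. u i * u i) = 1" using nu unfolding nsq_def power2_eq_square .
  have vv: "(\<Sum>j<p. v j * v j) = 1" using nv unfolding nsq_def power2_eq_square .
  have h1: "mtv m A y j = \<beta> * \<sigma> * v j + w j" if j: "j < p" for j
  proof -
    have "w j = (\<Sum>i<m. A i j * y i) - \<beta> * (\<Sum>i<m. A i j * u i) - \<sigma> * v j * (\<Sum>i<m. y i * u i)
               + \<sigma> * \<beta> * v j * (\<Sum>i<m. u i * u i)"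
      unfolding w_def mtv_def A'_def y'_def
      by (simp add: algebra_simps sum_subtractf sum.distrib sum_distrib_left)
    also have "\<dots> = mtv m A y j - \<beta> * \<sigma> * v j"
      unfolding Atu[OF j] yu uu mtv_def by (simp add: algebra_simps)
    finally show ?thesis by simp
  qed
  have A'v: "mat_vec p A' v i = 0" if i: "i < m" for i
  proof -
    have "mat_vec p A' v i = (\<Sum>j<p. A i j * v j) - \<sigma> * u i * (\<Sum>j<p. v j * v j)"
      unfolding mat_vec_def A'_def by (simp add: algebra_simps sum_subtractf sum_distrib_left)
    then show ?thesis using Av[OF i] vv by simp
  qed
  have vw: "(\<Sum>j<p. v j * w j) = 0"
  proof -
    have "(\<Sum>j<p. v j * w j) = vinner p w v" unfolding vinner_def by (simp add: mult_ac)
    also have "\<dots> = vinner m y' (mat_vec p A' v)" unfolding w_def duality ..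
    also have "\<dots> = 0" unfolding vinner_def using A'v by simp
    finally show ?thesis .
  qed
  have h2: "nsq p (mtv m A y) = \<beta>\<^sup>2 * \<sigma>\<^sup>2 + nsq p w"
  proof -
    have "nsq p (mtv m A y) = (\<Sum>j<p. (\<beta> * \<sigma> * v j + w j)\<^sup>2)" unfolding nsq_def using h1 by simp
    also have "\<dots> = \<beta>\<^sup>2 * \<sigma>\<^sup>2 * (\<Sum>j<p. v j * v j) + 2 * \<beta> * \<sigma> * (\<Sum>j<p. v j * w j) + nsq p w"
      unfolding nsq_def by (simp add: power2_eq_square algebra_simps sum.distrib sum_distrib_left)
    finally show ?thesis using vv vw by simp
  qed
  have h3: "nsq p w \<le> fsq m p A' * nsq m y'" unfolding w_def by (rule mtv_bound)
  have h4: "fsq m p A' = fsq m p A - \<sigma>\<^sup>2"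
  proof -
    have "fsq m p A' = fsq m p A - 2 * \<sigma> * (\<Sum>i<m. u i * (\<Sum>j<p. A i j * v j))
            + \<sigma>\<^sup>2 * (\<Sum>i<m. u i * u i) * (\<Sum>j<p. v j * v j)"
      unfolding fsq_def A'_def
      by (simp add: power2_eq_square algebra_simps sum_subtractf sum.distrib sum_distrib_left sum_distrib_right)
    also have "(\<Sum>i<m. u i * (\<Sum>j<p. A i j * v j)) = \<sigma>"
      using Av uu by (simp add: sum_distrib_left[symmetric] mult_ac)
    finally show ?thesis using uu vv by (simp add: power2_eq_square)
  qed
  have h5: "nsq m y' = nsq m y - \<beta>\<^sup>2"
  proof -
    have "nsq m y' = nsq m y - 2 * \<beta> * (\<Sum>i<m. y i * u i) + \<beta>\<^sup>2 * (\<Sum>i<m. u i * u i)"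
      unfolding nsq_def y'_def
      by (simp add: power2_eq_square algebra_simps sum_subtractf sum.distrib sum_distrib_left)
    then show ?thesis using yu uu by (simp add: power2_eq_square)
  qed
  show ?thesis using h2 h3 h4 h5 unfolding \<sigma>_def[symmetric] \<beta>_def[symmetric]
    by (simp add: mult_ac)
qed



fun up :: "(nat \<Rightarrow> nat) \<Rightarrow> net \<Rightarrow> nat \<Rightarrow> nat \<Rightarrow> mat" where
  "up d W k 0 = (\<lambda>i j. if i = j then 1 else 0)"
| "up d W k (Suc g) = (\<lambda>i j. \<Sum>l<d (Suc k). up d W (Suc k) g i l * W (Suc k) l j)"

lemma prod_split: "i < d (k + g) \<Longrightarrow> prodW d W (k + g) i j = (\<Sum>l<d k. up d W k g i l * prodW d W k l j)"
proof (induction g arbitrary: k i)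
  case 0
  have "(\<Sum>l<d k. (if i = l then 1 else 0) * prodW d W k l j) = (\<Sum>l<d k. if i = l then prodW d W k l j else 0)"
    by (rule sum.cong) auto
  then show ?case using 0 by simp
next
  case (Suc g)
  have "prodW d W (k + Suc g) i j = prodW d W (Suc k + g) i j" by simp
  also have "\<dots> = (\<Sum>l<d (Suc k). up d W (Suc k) g i l * prodW d W (Suc k) l j)"
    using Suc.IH[where k="Suc k" and i=i] Suc.prems by (simp del: prodW.simps)
  also have "\<dots> = (\<Sum>l<d (Suc k). up d W (Suc k) g i l * (\<Sum>l'<d k. W (Suc k) l l' * prodW d W k l' j))"
    by simp
  also have "\<dots> = (\<Sum>l'<d k. up d W k (Suc g) i l' * prodW d W k l' j)"
    by (simp add: sum_distrib_left sum_distrib_right sum.swap[of _ "{..<d k}"] mult_ac)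
  finally show ?case .
qed

lemma up_cong: "(\<And>m. m > k \<Longrightarrow> W2 m = W m) \<Longrightarrow> up d W2 k g = up d W k g"
proof (induction g arbitrary: k)
  case 0 then show ?case by simp
next
  case (Suc g)
  have "up d W2 (Suc k) g = up d W (Suc k) g" using Suc by simp
  then show ?case using Suc.prems by simp
qed

lemma prodW_cong: "(\<And>m. 1 \<le> m \<Longrightarrow> m \<le> k \<Longrightarrow> W2 m = W m) \<Longrightarrow> prodW d W2 k = prodW d W k"
proof (induction k)
  case 0 then show ?case by simp
next
  case (Suc k)
  have "prodW d W2 k = prodW d W k" using Suc by simp
  then show ?case using Suc.prems[of "Suc k"] by simp
qed

lemma sum_delta_mult: "j < (p::nat) \<Longrightarrow> (\<Sum>l<p. (if l = j then c else 0) * f l) = c * (f j :: real)"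
proof -
  assume j: "j < p"
  have "(\<Sum>l<p. (if l = j then c else 0) * f l) = (\<Sum>l<p. if l = j then c * f l else 0)"
    by (rule sum.cong) auto
  also have "\<dots> = c * f j" using j by simp
  finally show ?thesis .
qed

lemma sum_delta_mult2: "j < (p::nat) \<Longrightarrow> (\<Sum>l<p. f l * (if l = j then c else 0)) = f j * (c :: real)"
proof -
  assume j: "j < p"
  have "(\<Sum>l<p. f l * (if l = j then c else 0)) = (\<Sum>l<p. if l = j then f l * c else 0)"
    by (rule sum.cong) auto
  also have "\<dots> = f j * c" using j by simp
  finally show ?thesis .
qed

lemma prodW_pred: "1 \<le> k \<Longrightarrow> prodW d W k i j = (\<Sum>l<d (k - 1). W k i l * prodW d W (k - 1) l j)"
  by (cases k) auto

definition qv :: "(nat \<Rightarrow> nat) \<Rightarrow> net \<Rightarrow> nat \<Rightarrow> nat \<Rightarrow> vec \<Rightarrow> real" where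
  "qv d W k i zz = (\<Sum>j'<d 0. prodW d W k i j' * zz j')"

lemma qv_step: "(\<Sum>j<d k. W (Suc k) i' j * qv d W k j zz) = qv d W (Suc k) i' zz"
  unfolding qv_def by (simp add: sum_distrib_left sum_distrib_right sum.swap[of _ "{..<d 0}"] mult_ac)

lemma upd_entry_other: "m \<noteq> k \<Longrightarrow> upd_entry W k i j s m = W m"
  unfolding upd_entry_def by simp

lemma upd_entry_same: "upd_entry W k i j s k l l' = W k l l' + (if l = i \<and> l' = j then s - W k i j else 0)"
  unfolding upd_entry_def by auto

lemma wprod_upd:
  assumes k: "1 \<le> k" "k \<le> L" and i: "i < d k" and j: "j < d (k - 1)" and dL: "d L = 1"
  shows "wprod d L (upd_entry W k i j s) j' =
           wprod d L W j' + (s - W k i j) * up d W k (L - k) 0 i * prodW d W (k - 1) j j'"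
proof -
  let ?W2 = "upd_entry W k i j s"
  have L: "L = k + (L - k)" using k by simp
  have upc: "up d ?W2 k (L - k) = up d W k (L - k)" by (rule up_cong) (simp add: upd_entry_other)
  have pc: "prodW d ?W2 (k - 1) = prodW d W (k - 1)" by (rule prodW_cong) (use k in \<open>auto simp: upd_entry_other\<close>)
  have kS: "k = Suc (k - 1)" using k by simp
  have pk: "prodW d ?W2 k l j' = prodW d W k l j' + (if l = i then (s - W k i j) * prodW d W (k - 1) j j' else 0)" for l
  proof -
    have "prodW d ?W2 k l j' = (\<Sum>l'<d (k - 1). ?W2 k l l' * prodW d ?W2 (k - 1) l' j')"
      by (rule prodW_pred) (use k in simp)
    also have "\<dots> = (\<Sum>l'<d (k - 1). W k l l' * prodW d W (k - 1) l' j')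
        + (\<Sum>l'<d (k - 1). (if l = i \<and> l' = j then s - W k i j else 0) * prodW d W (k - 1) l' j')"
      unfolding pc upd_entry_same by (simp add: distrib_right sum.distrib)
    also have "(\<Sum>l'<d (k - 1). W k l l' * prodW d W (k - 1) l' j') = prodW d W k l j'"
      by (rule prodW_pred[symmetric]) (use k in simp)
    also have "(\<Sum>l'<d (k - 1). (if l = i \<and> l' = j then s - W k i j else 0) * prodW d W (k - 1) l' j')
        = (if l = i then (s - W k i j) * prodW d W (k - 1) j j' else 0)"
      using j by (cases "l = i") (simp_all add: sum_delta_mult)
    finally show ?thesis .
  qed
  have "wprod d L ?W2 j' = prodW d ?W2 (k + (L - k)) 0 j'" unfolding wprod_def using L by simp
  also have "\<dots> = (\<Sum>l<d k. up d W k (L - k) 0 l * prodW d ?W2 k l j')"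
    by (subst prod_split) (use dL L in \<open>simp_all add: upc\<close>)
  also have "\<dots> = (\<Sum>l<d k. up d W k (L - k) 0 l * prodW d W k l j')
      + (\<Sum>l<d k. up d W k (L - k) 0 l * (if l = i then (s - W k i j) * prodW d W (k - 1) j j' else 0))"
    unfolding pk by (simp add: distrib_left sum.distrib)
  also have "(\<Sum>l<d k. up d W k (L - k) 0 l * prodW d W k l j') = wprod d L W j'"
    unfolding wprod_def by (subst (2) L, subst prod_split) (use dL L in simp_all)
  also have "(\<Sum>l<d k. up d W k (L - k) 0 l * (if l = i then (s - W k i j) * prodW d W (k - 1) j j' else 0))
      = (s - W k i j) * up d W k (L - k) 0 i * prodW d W (k - 1) j j'"
    using i by (simp add: sum_delta_mult2)
  finally show ?thesis .
qed

lemma vinner_wprod_upd: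
  assumes k: "1 \<le> k" "k \<le> L" and i: "i < d k" and j: "j < d (k - 1)" and dL: "d L = 1"
  shows "vinner (d 0) (wprod d L (upd_entry W k i j s)) zz =
           vinner (d 0) (wprod d L W) zz + (s - W k i j) * (up d W k (L - k) 0 i * qv d W (k - 1) j zz)"
  unfolding vinner_def wprod_upd[OF assms] qv_def
  by (simp add: algebra_simps sum.distrib sum_subtractf sum_distrib_left)

definition grad :: "(real \<Rightarrow> real) \<Rightarrow> nat \<Rightarrow> (nat \<Rightarrow> vec) \<Rightarrow> (nat \<Rightarrow> nat) \<Rightarrow> nat \<Rightarrow> net \<Rightarrow> nat \<Rightarrow> nat \<Rightarrow> nat \<Rightarrow> real" where
  "grad dloss n z d L W k i j = (1 / real n) * (\<Sum>m<n. dloss (vinner (d 0) (wprod d L W) (z m))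
       * (up d W k (L - k) 0 i * qv d W (k - 1) j (z m)))"

lemma risk_deriv:
  assumes k: "1 \<le> k" "k \<le> L" and i: "i < d k" and j: "j < d (k - 1)" and dL: "d L = 1"
    and ld: "\<forall>s. (loss has_real_derivative dloss s) (at s)"
  shows "((\<lambda>s. risk loss n z d L (upd_entry W k i j s)) has_real_derivative grad dloss n z d L W k i j)
           (at (W k i j))"
proof -
  define P where "P m = vinner (d 0) (wprod d L W) (z m)" for m
  define c where "c m = up d W k (L - k) 0 i * qv d W (k - 1) j (z m)" for m
  have feq: "(\<lambda>s. risk loss n z d L (upd_entry W k i j s)) =
      (\<lambda>s. (1 / real n) * (\<Sum>m<n. loss (P m + (s - W k i j) * c m)))"
    unfolding risk_def vinner_wprod_upd[OF assms(1-5)] P_def c_def ..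
  have dm: "((\<lambda>s. loss (P m + (s - W k i j) * c m)) has_real_derivative dloss (P m) * c m) (at (W k i j))" for m
  proof -
    have g: "((\<lambda>s. P m + (s - W k i j) * c m) has_real_derivative c m) (at (W k i j))"
      by (auto intro!: derivative_eq_intros)
    have "(loss has_real_derivative dloss (P m)) (at (P m + (W k i j - W k i j) * c m))"
      using ld by simp
    from DERIV_chain2[OF this g] show ?thesis .
  qed
  have "((\<lambda>s. (1 / real n) * (\<Sum>m<n. loss (P m + (s - W k i j) * c m))) has_real_derivative
          (1 / real n) * (\<Sum>m<n. dloss (P m) * c m)) (at (W k i j))"
    by (intro DERIV_cmult DERIV_sum dm)
  then show ?thesis unfolding feq grad_def P_def c_def .
qed



lemma conservation:
  assumes dL: "d L = 1" and ld: "\<forall>s. (loss has_real_derivative dloss s) (at s)"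
    and gf: "gradient_flow loss n z d L W"
    and k: "1 \<le> k" "k < L" and i: "i < d k" and i': "i' < d k" and t: "t \<ge> 0"
  shows "gram_diff d (W t) k i i' = gram_diff d (W 0) k i i'"
proof -
  obtain W' where W': "\<forall>k\<in>{1..L}. \<forall>i<d k. \<forall>j<d (k - 1).
        continuous_on {0..} (\<lambda>s. W' s k i j) \<and>
        (\<forall>t\<ge>0. ((\<lambda>s. W s k i j) has_real_derivative W' t k i j) (at t within {0..}) \<and>
                ((\<lambda>s. risk loss n z d L (upd_entry (W t) k i j s))
                    has_real_derivative (- W' t k i j)) (at (W t k i j)))"
    using gf unfolding gradient_flow_def by blast
  have Weq: "W' t k i j = - grad dloss n z d L (W t) k i j"
    if "t \<ge> 0" "1 \<le> k" "k \<le> L" "i < d k" "j < d (k - 1)" for t k i j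
  proof -
    have "((\<lambda>s. risk loss n z d L (upd_entry (W t) k i j s)) has_real_derivative (- W' t k i j)) (at (W t k i j))"
      using W' that by auto
    moreover have "((\<lambda>s. risk loss n z d L (upd_entry (W t) k i j s)) has_real_derivative
        grad dloss n z d L (W t) k i j) (at (W t k i j))"
      using that dL ld by (intro risk_deriv) simp_all
    ultimately have "- W' t k i j = grad dloss n z d L (W t) k i j" by (rule DERIV_unique)
    then show ?thesis by simp
  qed
  have Wd: "((\<lambda>s. W s k i j) has_real_derivative W' t k i j) (at t within {0..})"
    if "t \<ge> 0" "1 \<le> k" "k \<le> L" "i < d k" "j < d (k - 1)" for t k i j
    using W' that by auto
  define lp where "lp t m = dloss (vinner (d 0) (wprod d L (W t)) (z m))" for t m
  define X where "X t a b = - (1 / real n) * (\<Sum>m<n. lp t m * (up d (W t) k (L - k) 0 a * qv d (W t) k b (z m)))" for t a b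
  have kS: "Suc (k - 1) = k" using k by simp
  have La: "(\<Sum>j<d (k - 1). W' t k a j * W t k b j) = X t a b" if t: "t \<ge> 0" and a: "a < d k" for t a b
  proof -
    have "(\<Sum>j<d (k - 1). W' t k a j * W t k b j) =
        (\<Sum>j<d (k - 1). (- (1 / real n) * (\<Sum>m<n. lp t m * (up d (W t) k (L - k) 0 a * qv d (W t) (k - 1) j (z m)))) * W t k b j)"
      by (rule sum.cong) (use t a k in \<open>simp_all add: Weq grad_def lp_def\<close>)
    also have "\<dots> = - (1 / real n) * (\<Sum>m<n. lp t m * up d (W t) k (L - k) 0 a * (\<Sum>j<d (k - 1). W t k b j * qv d (W t) (k - 1) j (z m)))"
      by (simp add: sum_distrib_left sum_distrib_right sum.swap[of _ "{..<d (k - Suc 0)}"] mult_ac)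
    also have "\<dots> = X t a b"
    proof -
      have qs: "(\<Sum>j<d (k - 1). W t k b j * qv d (W t) (k - 1) j (z m)) = qv d (W t) k b (z m)" for m
        using qv_step[where d=d and k="k - 1" and W="W t" and i'=b and zz="z m"] kS by simp
      show ?thesis unfolding qs X_def by (simp add: mult_ac)
    qed
    finally show ?thesis .
  qed
  have LkS: "L - k = Suc (L - Suc k)" using k by simp
  have Lb: "(\<Sum>r<d (Suc k). W' t (Suc k) r a * W t (Suc k) r b) = X t b a" if t: "t \<ge> 0" and a: "a < d k" for t a b
  proof -
    have "(\<Sum>r<d (Suc k). W' t (Suc k) r a * W t (Suc k) r b) =
        (\<Sum>r<d (Suc k). (- (1 / real n) * (\<Sum>m<n. lp t m * (up d (W t) (Suc k) (L - Suc k) 0 r * qv d (W t) k a (z m)))) * W t (Suc k) r b)"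
      by (rule sum.cong) (use t a k in \<open>simp_all add: Weq grad_def lp_def\<close>)
    also have "\<dots> = - (1 / real n) * (\<Sum>m<n. lp t m * qv d (W t) k a (z m) * (\<Sum>r<d (Suc k). up d (W t) (Suc k) (L - Suc k) 0 r * W t (Suc k) r b))"
      by (simp add: sum_distrib_left sum_distrib_right sum.swap[of _ "{..<d (Suc k)}"] mult_ac)
    also have "\<dots> = X t b a" unfolding X_def LkS by (simp add: mult_ac)
    finally show ?thesis .
  qed
  have deriv0: "((\<lambda>s. gram_diff d (W s) k i i') has_real_derivative 0) (at t within {0..})" if t: "t \<ge> 0" for t
  proof -
    have "((\<lambda>s. (\<Sum>j<d (k - 1). W s k i j * W s k i' j) - (\<Sum>r<d (Suc k). W s (Suc k) r i * W s (Suc k) r i'))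
       has_real_derivative
        (\<Sum>j<d (k - 1). W' t k i j * W t k i' j + W' t k i' j * W t k i j)
      - (\<Sum>r<d (Suc k). W' t (Suc k) r i * W t (Suc k) r i' + W' t (Suc k) r i' * W t (Suc k) r i))
       (at t within {0..})"
      using t k i i' kS by (intro DERIV_diff DERIV_sum DERIV_mult Wd) auto
    moreover have "(\<Sum>j<d (k - 1). W' t k i j * W t k i' j + W' t k i' j * W t k i j)
      - (\<Sum>r<d (Suc k). W' t (Suc k) r i * W t (Suc k) r i' + W' t (Suc k) r i' * W t (Suc k) r i) = 0"
      unfolding sum.distrib La[OF t i] La[OF t i'] Lb[OF t i] Lb[OF t i'] by simp
    ultimately show ?thesis unfolding gram_diff_def by simp
  qed
  obtain c where "\<forall>s\<in>{0..}. gram_diff d (W s) k i i' = c"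
    using has_field_derivative_zero_constant[of "{0::real..}" "\<lambda>s. gram_diff d (W s) k i i'"] deriv0
    by auto
  then show ?thesis using t by simp
qed



lemma fsq_trace:
  "fsq m p A - fsq q m B = (\<Sum>i<m. (\<Sum>j<p. A i j * A i j) - (\<Sum>r<q. B r i * B r i))"
  unfolding fsq_def power2_eq_square by (simp add: sum_subtractf sum.swap[of _ "{..<q}"])

lemma unit_vec: "j < (p::nat) \<Longrightarrow> vnorm p (\<lambda>l. if l = j then 1 else 0) = 1"
proof -
  assume j: "j < p"
  have "(\<Sum>l<p. (if l = j then 1 else 0)\<^sup>2) = (\<Sum>l<p. if l = j then 1 else (0::real))"
    by (rule sum.cong) auto
  then show ?thesis using j unfolding vnorm_def by simp
qed

locale setting =
  fixes L n :: nat and d :: "nat \<Rightarrow> nat" and z :: "nat \<Rightarrow> vec"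
    and loss dloss :: "real \<Rightarrow> real" and W :: "real \<Rightarrow> net"
  assumes L2: "L \<ge> 2" and dpos: "\<forall>k\<le>L. d k \<ge> 1" and dL: "d L = 1"
    and ld: "\<forall>s. (loss has_real_derivative dloss s) (at s)"
    and gf: "gradient_flow loss n z d L W"
begin

definition c :: "nat \<Rightarrow> real" where "c k = spec_norm (d k) (d k) (gram_diff d (W 0) k)"
definition F :: "real \<Rightarrow> real" where "F t = fsq (d L) (d (L - 1)) (W t L)"
definition S :: "nat \<Rightarrow> real" where "S k = (\<Sum>i\<in>{k..L - 1}. c i)"
definition a :: "nat \<Rightarrow> real" where "a k = fsq (d k) (d (k - 1)) (W 0 k) - fsq (d L) (d (L - 1)) (W 0 L)"
definition r :: "real \<Rightarrow> nat \<Rightarrow> vec" where "r t k = (\<lambda>l. up d (W t) k (L - k) 0 l)"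
definition Dc :: real where "Dc = Dconst d L (W 0)"

lemma c_nonneg: "0 \<le> c k" unfolding c_def by (rule spec_nonneg)

lemma S_nonneg: "0 \<le> S k" unfolding S_def by (simp add: sum_nonneg c_nonneg)

lemma S_step: "1 \<le> k \<Longrightarrow> k < L \<Longrightarrow> S k = c k + S (Suc k)"
  unfolding S_def by (subst sum.atLeast_Suc_atMost) auto

lemma S_L: "S L = 0" unfolding S_def using L2 by simp

lemma S_anti: "i \<le> j \<Longrightarrow> S j \<le> S i"
  unfolding S_def by (rule sum_mono2) (auto simp: c_nonneg)

lemma gram_cons: "t \<ge> 0 \<Longrightarrow> 1 \<le> k \<Longrightarrow> k < L \<Longrightarrow> i < d k \<Longrightarrow> i' < d k \<Longrightarrow>
    gram_diff d (W t) k i i' = gram_diff d (W 0) k i i'"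
  using conservation[OF dL ld gf] by blast

lemma qf_C: "t \<ge> 0 \<Longrightarrow> 1 \<le> k \<Longrightarrow> k < L \<Longrightarrow> \<bar>qf (d k) (gram_diff d (W t) k) x\<bar> \<le> c k * nsq (d k) x"
  using qf_cong[of "d k" "gram_diff d (W t) k" "gram_diff d (W 0) k" x] gram_cons qf_bound
  unfolding c_def by metis

lemma gram_id: "nsq (d (k - 1)) (mtv (d k) (W t k) x) =
    nsq (d (Suc k)) (mat_vec (d k) (W t (Suc k)) x) + qf (d k) (gram_diff d (W t) k) x"
  unfolding gram_diff_def by (rule gram_identity)

lemma fro_step: "t \<ge> 0 \<Longrightarrow> 1 \<le> k \<Longrightarrow> k < L \<Longrightarrow>
   fsq (d k) (d (k - 1)) (W t k) - fsq (d (Suc k)) (d k) (W t (Suc k))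
   = fsq (d k) (d (k - 1)) (W 0 k) - fsq (d (Suc k)) (d k) (W 0 (Suc k))"
  unfolding fsq_trace using gram_cons[of t k] unfolding gram_diff_def by simp

lemma fro_rel: "t \<ge> 0 \<Longrightarrow> 1 \<le> k \<Longrightarrow> k \<le> L \<Longrightarrow> fsq (d k) (d (k - 1)) (W t k) = F t + a k"
proof (induction "L - k" arbitrary: k)
  case 0
  then have "k = L" by simp
  then show ?case unfolding F_def a_def by simp
next
  case (Suc g)
  have IH: "fsq (d (Suc k)) (d (Suc k - 1)) (W t (Suc k)) = F t + a (Suc k)"
    using Suc.hyps(1)[of "Suc k"] Suc.hyps(2) Suc.prems by simp
  have "fsq (d k) (d (k - 1)) (W t k) = fsq (d (Suc k)) (d k) (W t (Suc k))
     + (fsq (d k) (d (k - 1)) (W 0 k) - fsq (d (Suc k)) (d k) (W 0 (Suc k)))"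
  proof -
    have kL: "k < L" using \<open>Suc g = L - k\<close> by linarith
    show ?thesis using fro_step[of t k] Suc.prems kL by linarith
  qed
  then show ?case using IH unfolding a_def by simp
qed

lemma r_step: "1 \<le> k \<Longrightarrow> k \<le> L \<Longrightarrow> r t (k - 1) = mtv (d k) (W t k) (r t k)"
proof -
  assume k: "1 \<le> k" "k \<le> L"
  have e: "L - (k - 1) = Suc (L - k)" using k by simp
  have kS: "Suc (k - 1) = k" using k by simp
  show ?thesis unfolding r_def mtv_def e using kS by (auto simp: mult_ac)
qed

lemma r_L: "r t L = (\<lambda>l. if 0 = l then 1 else 0)" unfolding r_def by simp

lemma nsq_r_L: "nsq (d L) (r t L) = 1" unfolding r_L nsq_def dL by simp

lemma wprod_r: "j < d 0 \<Longrightarrow> wprod d L (W t) j = r t 0 j"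
proof -
  assume j: "j < d 0"
  have "wprod d L (W t) j = prodW d (W t) (0 + L) 0 j" unfolding wprod_def by simp
  also have "\<dots> = (\<Sum>l<d 0. up d (W t) 0 L 0 l * prodW d (W t) 0 l j)"
    by (rule prod_split) (simp add: dL)
  also have "\<dots> = (\<Sum>l<d 0. up d (W t) 0 L 0 l * (if l = j then 1 else 0))"
    by (rule sum.cong) auto
  also have "\<dots> = up d (W t) 0 L 0 j" using j by (simp add: sum_delta_mult2)
  finally show ?thesis unfolding r_def by simp
qed

lemma chain: "t \<ge> 0 \<Longrightarrow> 1 \<le> k \<Longrightarrow> k \<le> L \<Longrightarrow>
   nsq (d (k - 1)) (r t (k - 1)) \<ge> (F t - S k) * nsq (d k) (r t k)"
proof (induction "L - k" arbitrary: k)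
  case 0
  then have k: "k = L" by simp
  have "nsq (d (L - 1)) (r t (L - 1)) = nsq (d (L - 1)) (mtv (d L) (W t L) (r t L))"
    using r_step[of L t] L2 by simp
  also have "\<dots> = F t"
    unfolding F_def nsq_def fsq_def mtv_def r_L dL by simp
  finally show ?case using k nsq_r_L S_L by simp
next
  case (Suc g)
  note t = Suc.prems(1)
  have k: "1 \<le> k" "k < L" using Suc by auto
  have IH: "nsq (d k) (r t k) \<ge> (F t - S (Suc k)) * nsq (d (Suc k)) (r t (Suc k))"
    using Suc.hyps(1)[of "Suc k"] Suc.hyps(2) Suc.prems k by simp
  define mk where "mk = nsq (d k) (r t k)"
  define mk1 where "mk1 = nsq (d (Suc k)) (r t (Suc k))"
  define N where "N = nsq (d (Suc k)) (mat_vec (d k) (W t (Suc k)) (r t k))"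
  have rk: "r t k = mtv (d (Suc k)) (W t (Suc k)) (r t (Suc k))" using r_step[of "Suc k" t] k by simp
  have h1: "mk\<^sup>2 \<le> mk1 * N" unfolding mk_def mk1_def N_def using mtv_sq_le rk by metis
  have N0: "0 \<le> N" unfolding N_def by (rule nsq_nonneg)
  have mk0: "0 \<le> mk" unfolding mk_def by (rule nsq_nonneg)
  have mk10: "0 \<le> mk1" unfolding mk1_def by (rule nsq_nonneg)
  have IH': "mk \<ge> (F t - S (Suc k)) * mk1" using IH unfolding mk_def mk1_def .
  have h2: "N \<ge> (F t - S (Suc k)) * mk"
  proof (cases "mk1 = 0")
    case True
    then have "mk = 0" using h1 by simp
    then show ?thesis using N0 by simp
  next
    case False
    then have pos: "mk1 > 0" using mk10 by simp
    have "mk1 * ((F t - S (Suc k)) * mk) = mk * ((F t - S (Suc k)) * mk1)" by (simp add: mult_ac)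
    also have "\<dots> \<le> mk * mk" using IH' mk0 by (simp add: mult_left_mono)
    also have "\<dots> \<le> mk1 * N" using h1 by (simp add: power2_eq_square)
    finally show ?thesis using pos by simp
  qed
  have h3: "nsq (d (k - 1)) (r t (k - 1)) = N + qf (d k) (gram_diff d (W t) k) (r t k)"
    unfolding N_def using r_step[of k t] k gram_id by simp
  have h4: "qf (d k) (gram_diff d (W t) k) (r t k) \<ge> - (c k * mk)"
    using qf_C[OF t k, of "r t k"] unfolding mk_def by linarith
  have "nsq (d (k - 1)) (r t (k - 1)) \<ge> (F t - S (Suc k)) * mk - c k * mk" using h2 h3 h4 by linarith
  also have "(F t - S (Suc k)) * mk - c k * mk = (F t - S k) * mk"
    using S_step[OF k] by (simp add: algebra_simps)
  finally show ?case unfolding mk_def .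
qed

lemma prod_lower: "t \<ge> 0 \<Longrightarrow> k \<le> L \<Longrightarrow> F t \<ge> S (Suc k) \<Longrightarrow>
   nsq (d k) (r t k) \<ge> (\<Prod>i\<in>{Suc k..L}. F t - S i)"
proof (induction "L - k" arbitrary: k)
  case 0
  then have "k = L" by simp
  then show ?case using nsq_r_L by simp
next
  case (Suc g)
  have k: "k < L" using Suc by simp
  have F1: "F t \<ge> S (Suc (Suc k))" using Suc.prems(3) S_anti[of "Suc k" "Suc (Suc k)"] by simp
  have IH: "nsq (d (Suc k)) (r t (Suc k)) \<ge> (\<Prod>i\<in>{Suc (Suc k)..L}. F t - S i)"
    using Suc.hyps(1)[of "Suc k"] Suc.hyps(2) Suc.prems k F1 by simp
  have ch: "nsq (d k) (r t k) \<ge> (F t - S (Suc k)) * nsq (d (Suc k)) (r t (Suc k))"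
    using chain[of t "Suc k"] Suc.prems k by simp
  have "(\<Prod>i\<in>{Suc k..L}. F t - S i) = (F t - S (Suc k)) * (\<Prod>i\<in>{Suc (Suc k)..L}. F t - S i)"
    using k by (subst prod.atLeast_Suc_atMost) auto
  also have "\<dots> \<le> (F t - S (Suc k)) * nsq (d (Suc k)) (r t (Suc k))"
    using IH Suc.prems(3) by (simp add: mult_left_mono)
  finally show ?case using ch by linarith
qed

lemma spec_lower: "t \<ge> 0 \<Longrightarrow> 1 \<le> k \<Longrightarrow> k \<le> L \<Longrightarrow> (spec_norm (d k) (d (k - 1)) (W t k))\<^sup>2 \<ge> F t - S k"
proof -
  assume t: "t \<ge> 0" and k: "1 \<le> k" "k \<le> L"
  show ?thesis
  proof (cases "F t \<le> S k")
    case True then show ?thesis by (smt (verit) zero_le_power2)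
  next
    case False
    have Fk: "F t \<ge> S (Suc k)" using False S_anti[of k "Suc k"] by simp
    have "(\<Prod>i\<in>{Suc k..L}. F t - S i) > 0"
    proof (rule prod_pos)
      fix i assume "i \<in> {Suc k..L}"
      then have "S i \<le> S k" using S_anti by simp
      then show "F t - S i > 0" using False by simp
    qed
    then have pos: "nsq (d k) (r t k) > 0" using prod_lower[OF t _ Fk] k by fastforce
    have "(F t - S k) * nsq (d k) (r t k) \<le> nsq (d (k - 1)) (r t (k - 1))" using chain[OF t k] .
    also have "\<dots> \<le> (spec_norm (d k) (d (k - 1)) (W t k))\<^sup>2 * nsq (d k) (r t k)"
      unfolding r_step[OF k] by (rule mtv_spec)
    finally show ?thesis using pos by simp
  qed
qed

lemma fsq_eq: "(fro_norm m p A)\<^sup>2 = fsq m p A" by (rule fro_sq)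

lemma Dc_bounds: "1 \<le> k \<Longrightarrow> k \<le> L \<Longrightarrow> a k + S k \<le> Dc"
proof -
  assume k: "1 \<le> k" "k \<le> L"
  have M: "(fro_norm (d k) (d (k - 1)) (W 0 k))\<^sup>2 \<le> Max ((\<lambda>k. (fro_norm (d k) (d (k - 1)) (W 0 k))\<^sup>2) ` {1..L})"
    using k by (intro Max_ge) auto
  have "S k \<le> (\<Sum>k\<in>{1..L - 1}. c k)" unfolding S_def using k by (intro sum_mono2) (auto simp: c_nonneg)
  then show ?thesis using M unfolding Dc_def Dconst_def a_def fro_sq c_def by simp
qed

lemma c_le_Dc: "1 \<le> k \<Longrightarrow> k < L \<Longrightarrow> c k \<le> Dc"
proof -
  assume k: "1 \<le> k" "k < L"
  have "c k \<le> (\<Sum>k\<in>{1..L - 1}. c k)" using k by (intro member_le_sum) (auto simp: c_nonneg)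
  moreover have M: "(fro_norm (d L) (d (L - 1)) (W 0 L))\<^sup>2 \<le> Max ((\<lambda>k. (fro_norm (d k) (d (k - 1)) (W 0 k))\<^sup>2) ` {1..L})"
    using k by (intro Max_ge) auto
  ultimately show ?thesis unfolding Dc_def Dconst_def c_def by simp
qed

lemma part1: "t \<ge> 0 \<Longrightarrow> 1 \<le> k \<Longrightarrow> k \<le> L \<Longrightarrow>
  (fro_norm (d k) (d (k - 1)) (W t k))\<^sup>2 - (spec_norm (d k) (d (k - 1)) (W t k))\<^sup>2 \<le> Dc"
  using fro_rel[of t k] spec_lower[of t k] Dc_bounds[of k] unfolding fro_sq by linarith

end



lemma part2_core:
  assumes svA: "top_sv_pair m p A u v" and svB: "top_sv_pair q m B u' v'"
    and C: "\<And>x. \<bar>qf m (\<lambda>i i'. (\<Sum>j<p. A i j * A i' j) - (\<Sum>r<q. B r i * B r i')) x\<bar> \<le> c * nsq m x"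
    and E: "fsq m p A - (spec_norm m p A)\<^sup>2 \<le> D"
    and cD: "c \<le> D" and cab: "c \<le> ab" and c0: "0 \<le> c"
    and s: "spec_norm q m B > 0"
  shows "(vinner m v' u)\<^sup>2 \<ge> 1 - (D + ab) / (spec_norm q m B)\<^sup>2"
proof -
  define \<sigma> where "\<sigma> = spec_norm m p A"
  define sB where "sB = spec_norm q m B"
  define X where "X = (vinner m v' u)\<^sup>2"
  define S where "S = sB\<^sup>2"
  define Ee where "Ee = fsq m p A - \<sigma>\<^sup>2"
  define K where "K = D + ab"
  let ?C = "\<lambda>i i'. (\<Sum>j<p. A i j * A i' j) - (\<Sum>r<q. B r i * B r i')"
  have nu: "nsq m u = 1" and nv: "nsq p v = 1" using svA unfolding top_sv_pair_def by (auto intro: unit_nsq)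
  have nu': "nsq q u' = 1" and nv': "nsq m v' = 1" using svB unfolding top_sv_pair_def by (auto intro: unit_nsq)
  have Atu: "\<And>j. j < p \<Longrightarrow> mtv m A u j = \<sigma> * v j"
    using svA unfolding top_sv_pair_def \<sigma>_def mtv_def by auto
  have Bv: "\<And>i. i < q \<Longrightarrow> mat_vec m B v' i = sB * u' i"
    using svB unfolding top_sv_pair_def sB_def mat_vec_def by auto
  have nBv: "nsq q (mat_vec m B v') = S"
    using nsq_cong[of q "mat_vec m B v'" "\<lambda>i. sB * u' i"] Bv nsq_scale nu' unfolding S_def by simp
  have h1: "nsq p (mtv m A v') \<ge> S - c"
    using gram_identity[of p m A v' q B] nBv C[of v'] nv' by simp
  have nAu: "nsq p (mtv m A u) = \<sigma>\<^sup>2"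
    using nsq_cong[of p "mtv m A u" "\<lambda>j. \<sigma> * v j"] Atu nsq_scale nv by simp
  have h2: "\<sigma>\<^sup>2 \<le> S + c"
    using gram_identity[of p m A u q B] nAu C[of u] nu spec_sq[of q m B u] unfolding S_def sB_def by simp
  have h3: "nsq p (mtv m A v') \<le> \<sigma>\<^sup>2 * X + Ee * (1 - X)"
    using sv_decomp[OF svA, of v'] nv' unfolding \<sigma>_def[symmetric] X_def Ee_def by simp
  have E0: "0 \<le> Ee" unfolding Ee_def \<sigma>_def
    using spec_le_fro[of m p A] spec_nonneg[of m p A] fro_sq[of m p A]
    by (metis diff_ge_0_iff_ge power_mono)
  have EeD: "Ee \<le> D" using E unfolding Ee_def \<sigma>_def .
  have X0: "0 \<le> X" unfolding X_def by simp
  have S0: "S > 0" unfolding S_def sB_def using s by simp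
  have goal: "X * S \<ge> S - K"
  proof (cases "S \<le> K")
    case True then show ?thesis using X0 S0 by (smt (verit) mult_nonneg_nonneg)
  next
    case False
    define T where "T = S + c - Ee"
    have T0: "T > 0" unfolding T_def using False EeD c0 cab unfolding K_def by linarith
    have "X * (\<sigma>\<^sup>2 - Ee) \<ge> S - c - Ee" using h1 h3 by (simp add: algebra_simps)
    moreover have "X * (\<sigma>\<^sup>2 - Ee) \<le> X * T" unfolding T_def using h2 X0 by (simp add: mult_left_mono)
    ultimately have xt: "X * T \<ge> S - c - Ee" by linarith
    have id: "S * (S - c - Ee) - (S - K) * T = (K - 2 * c) * (S - K) + K * (K - c - Ee)"
      unfolding T_def by (simp add: algebra_simps power2_eq_square)
    have "(K - 2 * c) * (S - K) \<ge> 0" using False cD cab unfolding K_def by simp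
    moreover have "K * (K - c - Ee) \<ge> 0" using cD cab EeD c0 unfolding K_def by simp
    ultimately have "S * (S - c - Ee) \<ge> (S - K) * T" using id by linarith
    moreover have "S * (X * T) \<ge> S * (S - c - Ee)" using xt S0 by (simp add: mult_left_mono)
    ultimately have "(X * S) * T \<ge> (S - K) * T" by (simp add: mult_ac)
    then show ?thesis using T0 by simp
  qed
  have "1 - K / S = (S - K) / S" using S0 by (simp add: field_simps)
  also have "\<dots> \<le> X" using goal S0 by (simp add: divide_le_eq)
  finally show ?thesis unfolding X_def K_def S_def sB_def .
qed

lemma spec_pos_nonzero:
  assumes "mat_nonzero q m B" shows "spec_norm q m B > 0"
proof -
  obtain i j where i: "i < q" and j: "j < m" and B: "B i j \<noteq> 0"
    using assms unfolding mat_nonzero_def by auto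
  define e where "e = (\<lambda>l. if l = j then 1 else (0::real))"
  have mv: "mat_vec m B e = (\<lambda>i'. B i' j)"
    unfolding mat_vec_def e_def using j by (simp add: sum_delta_mult2)
  have "(B i j)\<^sup>2 \<le> nsq q (\<lambda>i'. B i' j)" unfolding nsq_def using i
    by (intro member_le_sum) auto
  then have "nsq q (mat_vec m B e) > 0" unfolding mv using B by (smt (verit) zero_less_power2)
  then have "vnorm q (mat_vec m B e) > 0" unfolding vnorm_nsq by simp
  moreover have "vnorm q (mat_vec m B e) \<le> spec_norm q m B"
    by (rule spec_upper) (use j unit_vec in \<open>simp add: e_def\<close>)
  ultimately show ?thesis by simp
qed

context setting
begin

lemma part2:
  assumes t: "t \<ge> 0" and k: "1 \<le> k" "k < L"
    and nz: "mat_nonzero (d (Suc k)) (d k) (W t (Suc k))"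
    and svA: "top_sv_pair (d k) (d (k - 1)) (W t k) uk vk"
    and svB: "top_sv_pair (d (Suc k)) (d k) (W t (Suc k)) uk1 vk1"
  shows "(vinner (d k) vk1 uk)\<^sup>2 \<ge>
             1 - (Dc + (spec_norm (d (Suc k)) (d k) (W 0 (Suc k)))\<^sup>2
                    + (spec_norm (d k) (d (k - 1)) (W 0 k))\<^sup>2)
                  / (spec_norm (d (Suc k)) (d k) (W t (Suc k)))\<^sup>2"
proof -
  have "(vinner (d k) vk1 uk)\<^sup>2 \<ge> 1 - (Dc + ((spec_norm (d (Suc k)) (d k) (W 0 (Suc k)))\<^sup>2
                    + (spec_norm (d k) (d (k - 1)) (W 0 k))\<^sup>2))
                  / (spec_norm (d (Suc k)) (d k) (W t (Suc k)))\<^sup>2"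
  proof (rule part2_core[OF svA svB])
    show "\<bar>qf (d k) (\<lambda>i i'. (\<Sum>j<d (k - 1). W t k i j * W t k i' j) - (\<Sum>r<d (Suc k). W t (Suc k) r i * W t (Suc k) r i')) x\<bar>
        \<le> c k * nsq (d k) x" for x
      using qf_C[OF t k, of x] unfolding gram_diff_def .
    show "fsq (d k) (d (k - 1)) (W t k) - (spec_norm (d k) (d (k - 1)) (W t k))\<^sup>2 \<le> Dc"
      using part1[OF t k(1)] k unfolding fro_sq by simp
    show "c k \<le> Dc" using c_le_Dc k by simp
    show "c k \<le> (spec_norm (d (Suc k)) (d k) (W 0 (Suc k)))\<^sup>2 + (spec_norm (d k) (d (k - 1)) (W 0 k))\<^sup>2"
      unfolding c_def gram_diff_def
      using spec_gram_le[of "d k" "W 0 k" "d (k - 1)" "W 0 (Suc k)" "d (Suc k)"] by (simp add: add.commute)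
    show "0 \<le> c k" by (rule c_nonneg)
    show "spec_norm (d (Suc k)) (d k) (W t (Suc k)) > 0" using spec_pos_nonzero[OF nz] .
  qed
  then show ?thesis by (simp add: add.assoc)
qed

end



context setting
begin

lemma prod_upper: "t \<ge> 0 \<Longrightarrow> k \<le> L \<Longrightarrow> nsq (d k) (r t k) \<le> (\<Prod>i\<in>{Suc k..L}. F t + a i)"
proof (induction "L - k" arbitrary: k)
  case 0
  then have "k = L" by simp
  then show ?case using nsq_r_L by simp
next
  case (Suc g)
  have k: "k < L" using Suc by simp
  have IH: "nsq (d (Suc k)) (r t (Suc k)) \<le> (\<Prod>i\<in>{Suc (Suc k)..L}. F t + a i)"
    using Suc.hyps(1)[of "Suc k"] Suc.hyps(2) Suc.prems k by simp
  have fr: "fsq (d (Suc k)) (d k) (W t (Suc k)) = F t + a (Suc k)"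
    using fro_rel[of t "Suc k"] Suc.prems k by simp
  have nn: "0 \<le> F t + a (Suc k)" using fr fsq_nonneg by metis
  have "nsq (d k) (r t k) = nsq (d k) (mtv (d (Suc k)) (W t (Suc k)) (r t (Suc k)))"
    using r_step[of "Suc k" t] k by simp
  also have "\<dots> \<le> (F t + a (Suc k)) * nsq (d (Suc k)) (r t (Suc k))" using mtv_bound fr by metis
  also have "\<dots> \<le> (F t + a (Suc k)) * (\<Prod>i\<in>{Suc (Suc k)..L}. F t + a i)"
    using IH nn by (simp add: mult_left_mono)
  also have "\<dots> = (\<Prod>i\<in>{Suc k..L}. F t + a i)"
    using k by (subst (2) prod.atLeast_Suc_atMost) auto
  finally show ?case .
qed

lemma part3_bound:
  assumes t: "t \<ge> 0" and Ft: "F t \<ge> S 1 + (\<Sum>k\<in>{1..L}. \<bar>a k\<bar>) + 1"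
    and sv: "top_sv_pair (d 1) (d 0) (W t 1) u1 v1"
  defines "R \<equiv> \<bar>vinner (d 0) (\<lambda>j. wprod d L (W t) j / (\<Prod>k\<in>{1..L}. fro_norm (d k) (d (k - 1)) (W t k))) v1\<bar>"
  shows "(\<Prod>k\<in>{1..L}. (F t - S k) / (F t + a k)) - Dc / (F t + a 1) \<le> R \<and> R \<le> 1"
proof -
  define A where "A = (\<Sum>k\<in>{1..L}. \<bar>a k\<bar>)"
  define P where "P = (\<Prod>k\<in>{1..L}. fro_norm (d k) (d (k - 1)) (W t k))"
  define Q where "Q = (\<Prod>k\<in>{1..L}. F t + a k)"
  define Q2 where "Q2 = (\<Prod>k\<in>{2..L}. F t + a k)"
  define \<sigma> where "\<sigma> = spec_norm (d 1) (d 0) (W t 1)"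
  define \<beta> where "\<beta> = vinner (d 1) (r t 1) u1"
  define x where "x = vinner (d 0) (r t 0) v1"
  define m0 where "m0 = nsq (d 0) (r t 0)"
  define m1 where "m1 = nsq (d 1) (r t 1)"
  have L1: "1 \<le> L" using L2 by simp
  have S0: "0 \<le> S 1" by (rule S_nonneg)
  have apos: "F t + a k > 0" if "k \<in> {1..L}" for k
  proof -
    have "\<bar>a k\<bar> \<le> A" unfolding A_def using that by (intro member_le_sum) auto
    then show ?thesis using Ft S0 unfolding A_def by linarith
  qed
  have fr: "(fro_norm (d k) (d (k - 1)) (W t k))\<^sup>2 = F t + a k" if "k \<in> {1..L}" for k
    using fro_rel[of t k] that t unfolding fro_sq by simp
  have P2: "P\<^sup>2 = Q" unfolding P_def Q_def prod_power_distrib using fr by simp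
  have Ppos: "P > 0" unfolding P_def
  proof (rule prod_pos)
    fix k assume k: "k \<in> {1..L}"
    have "(fro_norm (d k) (d (k - 1)) (W t k))\<^sup>2 > 0" using fr[OF k] apos[OF k] by simp
    then show "fro_norm (d k) (d (k - 1)) (W t k) > 0"
      using fro_nonneg[of "d k" "d (k - 1)" "W t k"] by (cases "fro_norm (d k) (d (k - 1)) (W t k) = 0") auto
  qed
  have Qpos: "Q > 0" unfolding Q_def using apos by (intro prod_pos) auto
  have QQ2: "Q = (F t + a 1) * Q2" unfolding Q_def Q2_def using L1 by (subst prod.atLeast_Suc_atMost) (auto simp: numeral_2_eq_2)
  have Rx: "R = \<bar>x\<bar> / P"
  proof -
    have "vinner (d 0) (\<lambda>j. wprod d L (W t) j / P) v1 = (\<Sum>j<d 0. r t 0 j * v1 j) / P"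
      unfolding vinner_def sum_divide_distrib by (rule sum.cong) (auto simp: wprod_r)
    then show ?thesis unfolding R_def P_def[symmetric] x_def vinner_def using Ppos by simp
  qed
  have r0: "r t 0 = mtv (d 1) (W t 1) (r t 1)" using r_step[of 1 t] L1 by simp
  have x_eq: "x = \<sigma> * \<beta>"
  proof -
    have "x = vinner (d 1) (r t 1) (mat_vec (d 0) (W t 1) v1)" unfolding x_def r0 duality ..
    also have "\<dots> = vinner (d 1) (r t 1) (\<lambda>i. \<sigma> * u1 i)"
      unfolding vinner_def using sv unfolding top_sv_pair_def mat_vec_def \<sigma>_def by (intro sum.cong) auto
    also have "\<dots> = \<sigma> * \<beta>" unfolding vinner_def \<beta>_def by (simp add: sum_distrib_left mult_ac)
    finally show ?thesis .
  qed
  define E where "E = fsq (d 1) (d 0) (W t 1) - \<sigma>\<^sup>2"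
  have dec: "m0 \<le> \<sigma>\<^sup>2 * \<beta>\<^sup>2 + E * (m1 - \<beta>\<^sup>2)"
    using sv_decomp[OF sv, of "r t 1"] unfolding m0_def r0 m1_def \<sigma>_def[symmetric] \<beta>_def[symmetric] E_def .
  have ED: "E \<le> Dc" using part1[OF t, of 1] L1 unfolding E_def \<sigma>_def fro_sq by simp
  have E0: "0 \<le> E" unfolding E_def \<sigma>_def
    using spec_le_fro[of "d 1" "d 0" "W t 1"] spec_nonneg[of "d 1" "d 0" "W t 1"] fro_sq[of "d 1" "d 0" "W t 1"]
    by (metis diff_ge_0_iff_ge power_mono)
  have nu1: "nsq (d 1) u1 = 1" using sv unfolding top_sv_pair_def by (auto intro: unit_nsq)
  have bm1: "\<beta>\<^sup>2 \<le> m1" using cs[of "d 1" "r t 1" u1] nu1 unfolding \<beta>_def m1_def by simp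
  have "E * (m1 - \<beta>\<^sup>2) \<le> Dc * (m1 - \<beta>\<^sup>2)" using ED bm1 by (simp add: mult_right_mono)
  also have "\<dots> \<le> Dc * m1" using ED E0 by (simp add: mult_left_mono)
  finally have x2: "x\<^sup>2 \<ge> m0 - Dc * m1" using dec x_eq by (simp add: power_mult_distrib)
  have m0l: "m0 \<ge> (\<Prod>i\<in>{1..L}. F t - S i)" using prod_lower[of t 0] t Ft S_nonneg unfolding m0_def
    by (smt (verit) One_nat_def S_anti le0 sum_nonneg abs_ge_zero)
  have m1u: "m1 \<le> Q2" using prod_upper[of t 1] t L1 unfolding m1_def Q2_def by (simp add: numeral_2_eq_2)
  have Dc0: "0 \<le> Dc" using E0 ED by simp
  define G where "G = (\<Prod>k\<in>{1..L}. (F t - S k) / (F t + a k)) - Dc / (F t + a 1)"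
  have GQ: "G * Q = (\<Prod>i\<in>{1..L}. F t - S i) - Dc * Q2"
  proof -
    have "(\<Prod>k\<in>{1..L}. (F t - S k) / (F t + a k)) = (\<Prod>i\<in>{1..L}. F t - S i) / Q"
      unfolding Q_def by (rule prod_dividef)
    then show ?thesis unfolding G_def using Qpos QQ2 apos[of 1] L1 by (simp add: field_simps)
  qed
  have "G * Q \<le> x\<^sup>2" unfolding GQ using m0l m1u x2 Dc0 by (smt (verit) mult_left_mono)
  also have "x\<^sup>2 = R\<^sup>2 * Q" unfolding Rx P2[symmetric] using Ppos by (simp add: power_divide)
  finally have GR: "G \<le> R\<^sup>2" using Qpos by simp
  have "\<bar>x\<bar> \<le> vnorm (d 0) (r t 0) * vnorm (d 0) v1" unfolding x_def by (rule cs_abs)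
  also have "\<dots> = sqrt m0" using sv unfolding top_sv_pair_def m0_def vnorm_nsq by simp
  also have "\<dots> \<le> sqrt Q" using prod_upper[of t 0] t unfolding m0_def Q_def by simp
  also have "\<dots> = P" using P2 Ppos by (metis abs_of_pos real_sqrt_abs)
  finally have R1: "R \<le> 1" unfolding Rx using Ppos by simp
  have R0: "R \<ge> 0" unfolding Rx using Ppos by simp
  have "R\<^sup>2 \<le> R" using R0 R1 by (simp add: power2_eq_square mult_left_le)
  then show ?thesis using GR R1 unfolding G_def by simp
qed

end



lemma frac_lim: "((\<lambda>x::real. (x - s) / (x + b)) \<longlongrightarrow> 1) at_top" by real_asymp
lemma frac_lim0: "((\<lambda>x::real. c / (x + b)) \<longlongrightarrow> 0) at_top" by real_asymp

context setting
begin

lemma part3: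
  assumes lim: "filterlim (\<lambda>t. Max ((\<lambda>k. fro_norm (d k) (d (k - 1)) (W t k)) ` {1..L})) at_top at_top"
    and sv: "\<forall>t\<ge>0. top_sv_pair (d 1) (d 0) (W t 1) (u1 t) (v1 t)"
  shows "((\<lambda>t. \<bar>vinner (d 0)
                     (\<lambda>j. wprod d L (W t) j / (\<Prod>k\<in>{1..L}. fro_norm (d k) (d (k - 1)) (W t k)))
                     (v1 t)\<bar>) \<longlongrightarrow> 1) at_top"
proof -
  define A where "A = (\<Sum>k\<in>{1..L}. \<bar>a k\<bar>)"
  define M where "M t = Max ((\<lambda>k. fro_norm (d k) (d (k - 1)) (W t k)) ` {1..L})" for t
  have Mle: "- A + M t \<le> F t" if t: "t \<ge> 0" and M1: "M t \<ge> 1" for t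
  proof -
    have "M t \<in> (\<lambda>k. fro_norm (d k) (d (k - 1)) (W t k)) ` {1..L}"
      unfolding M_def by (rule Max_in) (use L2 in auto)
    then obtain k where k: "k \<in> {1..L}" and Mk: "M t = fro_norm (d k) (d (k - 1)) (W t k)" by auto
    have "(M t)\<^sup>2 = F t + a k" using fro_rel[of t k] k t unfolding Mk fro_sq by simp
    moreover have "\<bar>a k\<bar> \<le> A" unfolding A_def using k by (intro member_le_sum) auto
    moreover have "M t \<le> (M t)\<^sup>2" using M1 by (simp add: power2_eq_square)
    ultimately show ?thesis by linarith
  qed
  have Flim: "filterlim F at_top at_top"
  proof (rule filterlim_at_top_mono)
    show "filterlim (\<lambda>t. - A + M t) at_top at_top"
      by (rule filterlim_tendsto_add_at_top[OF tendsto_const]) (use lim in \<open>simp add: M_def\<close>)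
    have "eventually (\<lambda>t. M t \<ge> 1) at_top" using lim unfolding M_def filterlim_at_top by auto
    moreover have "eventually (\<lambda>t. t \<ge> (0::real)) at_top" by (rule eventually_ge_at_top)
    ultimately show "eventually (\<lambda>t. - A + M t \<le> F t) at_top"
      by eventually_elim (use Mle in auto)
  qed
  define G where "G x = (\<Prod>k\<in>{1..L}. (x - S k) / (x + a k)) - Dc / (x + a 1)" for x
  have Glim: "(G \<longlongrightarrow> 1) at_top"
  proof -
    have "((\<lambda>x. \<Prod>k\<in>{1..L}. (x - S k) / (x + a k)) \<longlongrightarrow> (\<Prod>k\<in>{1..L}. 1)) at_top"
      by (rule tendsto_prod) (rule frac_lim)
    moreover have "((\<lambda>x. Dc / (x + a 1)) \<longlongrightarrow> 0) at_top" by (rule frac_lim0)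
    ultimately have "(G \<longlongrightarrow> (\<Prod>k\<in>{1..L}. (1::real)) - 0) at_top"
      unfolding G_def by (intro tendsto_diff)
    then show ?thesis by simp
  qed
  have GF: "((\<lambda>t. G (F t)) \<longlongrightarrow> 1) at_top" using filterlim_compose[OF Glim Flim] .
  have ev: "eventually (\<lambda>t. t \<ge> 0 \<and> F t \<ge> S 1 + A + 1) at_top"
  proof -
    have "eventually (\<lambda>t. F t \<ge> S 1 + A + 1) at_top" using Flim unfolding filterlim_at_top by auto
    moreover have "eventually (\<lambda>t. t \<ge> (0::real)) at_top" by (rule eventually_ge_at_top)
    ultimately show ?thesis by eventually_elim auto
  qed
  have bnd: "eventually (\<lambda>t. G (F t) \<le> \<bar>vinner (d 0)
                     (\<lambda>j. wprod d L (W t) j / (\<Prod>k\<in>{1..L}. fro_norm (d k) (d (k - 1)) (W t k)))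
                     (v1 t)\<bar> \<and> \<bar>vinner (d 0)
                     (\<lambda>j. wprod d L (W t) j / (\<Prod>k\<in>{1..L}. fro_norm (d k) (d (k - 1)) (W t k)))
                     (v1 t)\<bar> \<le> 1) at_top"
    using ev
  proof eventually_elim
    case (elim t)
    then show ?case using part3_bound[of t "u1 t" "v1 t"] sv unfolding G_def A_def by auto
  qed
  show ?thesis
    by (rule tendsto_sandwich[OF _ _ GF tendsto_const]) (use bnd in \<open>auto elim: eventually_mono\<close>)
qed

end

theorem mainTheorem3:
  fixes L n :: nat and d :: "nat \<Rightarrow> nat"
    and x :: "nat \<Rightarrow> vec" and y :: "nat \<Rightarrow> real" and z :: "nat \<Rightarrow> vec"
    and loss dloss :: "real \<Rightarrow> real" and W :: "real \<Rightarrow> net"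
  assumes L2: "L \<ge> 2"
    and dpos: "\<forall>k\<le>L. d k \<ge> 1" and dL: "d L = 1"
    and npos: "n \<ge> 1"
    and data: "\<forall>i<n. vnorm (d 0) (x i) \<le> 1 \<and> (y i = 1 \<or> y i = -1) \<and> (\<forall>j. z i j = y i * x i j)"
    and ell_deriv: "\<forall>s. (loss has_real_derivative dloss s) (at s)"
    and ell_C1: "continuous_on UNIV dloss"
    and gf: "gradient_flow loss n z d L W"
  shows
    "(\<forall>t\<ge>0. \<forall>k\<in>{1..L}.
        (fro_norm (d k) (d (k - 1)) (W t k))\<^sup>2 - (spec_norm (d k) (d (k - 1)) (W t k))\<^sup>2
          \<le> Dconst d L (W 0))
   \<and> (\<forall>t\<ge>0. \<forall>k. 1 \<le> k \<and> k < L \<longrightarrow>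
        mat_nonzero (d (Suc k)) (d k) (W t (Suc k)) \<longrightarrow>
        (\<forall>uk vk uk1 vk1.
           top_sv_pair (d k) (d (k - 1)) (W t k) uk vk \<longrightarrow>
           top_sv_pair (d (Suc k)) (d k) (W t (Suc k)) uk1 vk1 \<longrightarrow>
           (vinner (d k) vk1 uk)\<^sup>2 \<ge>
             1 - (Dconst d L (W 0) + (spec_norm (d (Suc k)) (d k) (W 0 (Suc k)))\<^sup>2
                    + (spec_norm (d k) (d (k - 1)) (W 0 k))\<^sup>2)
                  / (spec_norm (d (Suc k)) (d k) (W t (Suc k)))\<^sup>2))
   \<and> (filterlim (\<lambda>t. Max ((\<lambda>k. fro_norm (d k) (d (k - 1)) (W t k)) ` {1..L})) at_top at_top \<longrightarrow>
        (\<forall>u1 v1 :: real \<Rightarrow> vec.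
           (\<forall>t\<ge>0. top_sv_pair (d 1) (d 0) (W t 1) (u1 t) (v1 t)) \<longrightarrow>
           ((\<lambda>t. \<bar>vinner (d 0)
                     (\<lambda>j. wprod d L (W t) j / (\<Prod>k\<in>{1..L}. fro_norm (d k) (d (k - 1)) (W t k)))
                     (v1 t)\<bar>) \<longlongrightarrow> 1) at_top))"
proof -
  interpret setting L n d z loss dloss W
    using L2 dpos dL ell_deriv gf by unfold_locales auto
  show ?thesis
  proof (intro conjI)
    show "\<forall>t\<ge>0. \<forall>k\<in>{1..L}.
        (fro_norm (d k) (d (k - 1)) (W t k))\<^sup>2 - (spec_norm (d k) (d (k - 1)) (W t k))\<^sup>2
          \<le> Dconst d L (W 0)"
      using part1 unfolding Dc_def by auto
    show "\<forall>t\<ge>0. \<forall>k. 1 \<le> k \<and> k < L \<longrightarrow>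
        mat_nonzero (d (Suc k)) (d k) (W t (Suc k)) \<longrightarrow>
        (\<forall>uk vk uk1 vk1.
           top_sv_pair (d k) (d (k - 1)) (W t k) uk vk \<longrightarrow>
           top_sv_pair (d (Suc k)) (d k) (W t (Suc k)) uk1 vk1 \<longrightarrow>
           (vinner (d k) vk1 uk)\<^sup>2 \<ge>
             1 - (Dconst d L (W 0) + (spec_norm (d (Suc k)) (d k) (W 0 (Suc k)))\<^sup>2
                    + (spec_norm (d k) (d (k - 1)) (W 0 k))\<^sup>2)
                  / (spec_norm (d (Suc k)) (d k) (W t (Suc k)))\<^sup>2)"
      using part2 unfolding Dc_def by blast
    show "filterlim (\<lambda>t. Max ((\<lambda>k. fro_norm (d k) (d (k - 1)) (W t k)) ` {1..L})) at_top at_top \<longrightarrow>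
        (\<forall>u1 v1 :: real \<Rightarrow> vec.
           (\<forall>t\<ge>0. top_sv_pair (d 1) (d 0) (W t 1) (u1 t) (v1 t)) \<longrightarrow>
           ((\<lambda>t. \<bar>vinner (d 0)
                     (\<lambda>j. wprod d L (W t) j / (\<Prod>k\<in>{1..L}. fro_norm (d k) (d (k - 1)) (W t k)))
                     (v1 t)\<bar>) \<longlongrightarrow> 1) at_top)"
      using part3 by blast
  qed
qed



end
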